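(* Let $G$ be a finite group and $M$ a $\mathbb{B}[G]$-module generated by $n$ elements. Let $P\subseteq M$ be the poset of join-irreducible elements of $M$. Then $P$ does not contain a chain of length greater than $n$ (i.e. no totally ordered subset of $P$ has more than $n$ elements).
   Context: $\mathbb{B}=\{0,1\}$ is the Boolean semifield with $1+1=1$; $\mathbb{B}[G]$ is the group semiring. A $\mathbb{B}$-module is partially ordered by $x\le y$ iff $x+y=y$. An element $v$ is join-irreducible if $v\neq0$ and $v=a+b$ implies $v=a$ or $v=b$. *)

theory Defs
  imports "HOL-Algebra.Coset"
begin

text \<open>Elements of the group semiring B[G] of a finite group G are identified with
 subsets of carrier G (functions G -> B): sum = union, zero = empty set,
 product = set product S <#> T, one = {1}.\<close>

definition BG_module ::
  "('g, 'b) monoid_scheme \<Rightarrow> 'm set \<Rightarrow> ('m \<Rightarrow> 'm \<Rightarrow> 'm) \<Rightarrow> 'm \<Rightarrow> ('g set \<Rightarrow> 'm \<Rightarrow> 'm) \<Rightarrow> bool"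
  where
  "BG_module G M add zero smul \<longleftrightarrow>
     zero \<in> M \<and>
     (\<forall>x\<in>M. \<forall>y\<in>M. add x y \<in> M) \<and>
     (\<forall>x\<in>M. \<forall>y\<in>M. \<forall>z\<in>M. add (add x y) z = add x (add y z)) \<and>
     (\<forall>x\<in>M. \<forall>y\<in>M. add x y = add y x) \<and>
     (\<forall>x\<in>M. add zero x = x) \<and>
     (\<forall>S. \<forall>x\<in>M. S \<subseteq> carrier G \<longrightarrow> smul S x \<in> M) \<and>
     (\<forall>S T. \<forall>x\<in>M. S \<subseteq> carrier G \<longrightarrow> T \<subseteq> carrier G \<longrightarrow>
        smul (S \<union> T) x = add (smul S x) (smul T x)) \<and>
     (\<forall>S. \<forall>x\<in>M. \<forall>y\<in>M. S \<subseteq> carrier G \<longrightarrow>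
        smul S (add x y) = add (smul S x) (smul S y)) \<and>
     (\<forall>S T. \<forall>x\<in>M. S \<subseteq> carrier G \<longrightarrow> T \<subseteq> carrier G \<longrightarrow>
        smul (S <#>\<^bsub>G\<^esub> T) x = smul S (smul T x)) \<and>
     (\<forall>x\<in>M. smul {} x = zero) \<and>
     (\<forall>S. S \<subseteq> carrier G \<longrightarrow> smul S zero = zero) \<and>
     (\<forall>x\<in>M. smul {\<one>\<^bsub>G\<^esub>} x = x)"

definition generated_by ::
  "('g, 'b) monoid_scheme \<Rightarrow> 'm set \<Rightarrow> ('m \<Rightarrow> 'm \<Rightarrow> 'm) \<Rightarrow> 'm \<Rightarrow> ('g set \<Rightarrow> 'm \<Rightarrow> 'm) \<Rightarrow> 'm list \<Rightarrow> bool"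
  where
  "generated_by G M add zero smul xs \<longleftrightarrow>
     set xs \<subseteq> M \<and>
     (\<forall>m\<in>M. \<exists>Ss. length Ss = length xs \<and> (\<forall>S\<in>set Ss. S \<subseteq> carrier G) \<and>
        m = foldr add (map2 smul Ss xs) zero)"

definition mle :: "('m \<Rightarrow> 'm \<Rightarrow> 'm) \<Rightarrow> 'm \<Rightarrow> 'm \<Rightarrow> bool"
  where "mle add x y \<longleftrightarrow> add x y = y"

definition join_irreducible :: "'m set \<Rightarrow> ('m \<Rightarrow> 'm \<Rightarrow> 'm) \<Rightarrow> 'm \<Rightarrow> 'm \<Rightarrow> bool"
  where "join_irreducible M add zero v \<longleftrightarrow>
     v \<in> M \<and> v \<noteq> zero \<and> (\<forall>a\<in>M. \<forall>b\<in>M. v = add a b \<longrightarrow> v = a \<or> v = b)"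

end

theory Submission
  imports Defs "HOL-Algebra.Multiplicative_Group"
begin

locale bgmod = group G for G :: "('g, 'b) monoid_scheme" (structure) +
  fixes M :: "'m set" and add :: "'m \<Rightarrow> 'm \<Rightarrow> 'm" and zero :: 'm and smul :: "'g set \<Rightarrow> 'm \<Rightarrow> 'm"
  assumes bg: "BG_module G M add zero smul" and fin: "finite (carrier G)"
begin

lemmas bgs = bg[unfolded BG_module_def]

lemma zero_in: "zero \<in> M" using bgs[THEN conjunct1] by blast
lemma add_in: "x \<in> M \<Longrightarrow> y \<in> M \<Longrightarrow> add x y \<in> M" using bgs[THEN conjunct2, THEN conjunct1] by blast
lemma add_assoc: "x \<in> M \<Longrightarrow> y \<in> M \<Longrightarrow> z \<in> M \<Longrightarrow> add (add x y) z = add x (add y z)"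
  using bgs[THEN conjunct2, THEN conjunct2, THEN conjunct1] by blast
lemma add_comm: "x \<in> M \<Longrightarrow> y \<in> M \<Longrightarrow> add x y = add y x" using bgs[THEN conjunct2, THEN conjunct2, THEN conjunct2, THEN conjunct1] by blast
lemma smul_in: "S \<subseteq> carrier G \<Longrightarrow> x \<in> M \<Longrightarrow> smul S x \<in> M" using bgs[THEN conjunct2, THEN conjunct2, THEN conjunct2, THEN conjunct2, THEN conjunct2, THEN conjunct1] by blast
lemma smul_un: "S \<subseteq> carrier G \<Longrightarrow> T \<subseteq> carrier G \<Longrightarrow> x \<in> M \<Longrightarrow> smul (S \<union> T) x = add (smul S x) (smul T x)"
  using bgs[THEN conjunct2, THEN conjunct2, THEN conjunct2, THEN conjunct2, THEN conjunct2, THEN conjunct2, THEN conjunct1] by blast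
lemma smul_add: "S \<subseteq> carrier G \<Longrightarrow> x \<in> M \<Longrightarrow> y \<in> M \<Longrightarrow> smul S (add x y) = add (smul S x) (smul S y)"
  using bgs[THEN conjunct2, THEN conjunct2, THEN conjunct2, THEN conjunct2, THEN conjunct2, THEN conjunct2, THEN conjunct2, THEN conjunct1] by blast
lemma smul_mult: "S \<subseteq> carrier G \<Longrightarrow> T \<subseteq> carrier G \<Longrightarrow> x \<in> M \<Longrightarrow> smul (S <#>\<^bsub>G\<^esub> T) x = smul S (smul T x)"
  using bgs[THEN conjunct2, THEN conjunct2, THEN conjunct2, THEN conjunct2, THEN conjunct2, THEN conjunct2, THEN conjunct2, THEN conjunct2, THEN conjunct1] by blast
lemma smul_empty: "x \<in> M \<Longrightarrow> smul {} x = zero" using bgs[THEN conjunct2, THEN conjunct2, THEN conjunct2, THEN conjunct2, THEN conjunct2, THEN conjunct2, THEN conjunct2, THEN conjunct2, THEN conjunct2, THEN conjunct1] by blast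
lemma smul_one: "x \<in> M \<Longrightarrow> smul {\<one>} x = x" using bgs[THEN conjunct2, THEN conjunct2, THEN conjunct2, THEN conjunct2, THEN conjunct2, THEN conjunct2, THEN conjunct2, THEN conjunct2, THEN conjunct2, THEN conjunct2, THEN conjunct2] by blast

lemma idem: "x \<in> M \<Longrightarrow> add x x = x"
  using smul_un[of "{\<one>}" "{\<one>}" x] smul_one by simp

lemma smul_g: "g \<in> carrier G \<Longrightarrow> h \<in> carrier G \<Longrightarrow> x \<in> M \<Longrightarrow> smul {g} (smul {h} x) = smul {g \<otimes> h} x"
  using smul_mult[of "{g}" "{h}" x] by (simp add: set_mult_def)

lemma mle_trans: "x \<in> M \<Longrightarrow> y \<in> M \<Longrightarrow> z \<in> M \<Longrightarrow> mle add x y \<Longrightarrow> mle add y z \<Longrightarrow> mle add x z"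
  unfolding mle_def by (metis add_assoc)

lemma mle_antisym: "x \<in> M \<Longrightarrow> y \<in> M \<Longrightarrow> mle add x y \<Longrightarrow> mle add y x \<Longrightarrow> x = y"
  unfolding mle_def by (metis add_comm)

lemma mle_mono: "S \<subseteq> carrier G \<Longrightarrow> x \<in> M \<Longrightarrow> y \<in> M \<Longrightarrow> mle add x y \<Longrightarrow> mle add (smul S x) (smul S y)"
  unfolding mle_def by (metis smul_add)

lemma powle: fixes j :: nat assumes k: "k \<in> carrier G" and x: "x \<in> M" and le: "mle add (smul {k} x) x"
  shows "mle add (smul {k [^] j} x) x"
proof (induction j)
  case 0
  then show ?case using x idem smul_one by (simp add: mle_def)
next
  case (Suc j)
  have "smul {k [^] Suc j} x = smul {k [^] j} (smul {k} x)"
    using smul_g[of "k [^] j" k x] k x by (simp add: nat_pow_Suc)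
  moreover have "mle add (smul {k [^] j} (smul {k} x)) (smul {k [^] j} x)"
    using mle_mono[OF _ smul_in[OF _ x] x le] k by simp
  ultimately show ?case using mle_trans Suc k x smul_in by (metis empty_subsetI insert_subset nat_pow_closed)
qed

lemma fixed: assumes k: "k \<in> carrier G" and x: "x \<in> M" and le: "mle add (smul {k} x) x"
  shows "smul {k} x = x"
proof -
  obtain j where j: "order G = Suc j" using fin order_gt_0_iff_finite by (metis gr0_conv_Suc)
  have "k [^] Suc j = \<one>" using pow_order_eq_1[OF k] j by simp
  hence "smul {k [^] Suc j} x = x" using smul_one x by simp
  moreover have "smul {k [^] Suc j} x = smul {k} (smul {k [^] j} x)"
    using smul_g[of k "k [^] j" x] k x nat_pow_Suc2[OF k, of j] by simp
  moreover have "mle add (smul {k} (smul {k [^] j} x)) (smul {k} x)"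
    using mle_mono[OF _ smul_in[OF _ x] x powle[OF k x le]] k by simp
  ultimately have "mle add x (smul {k} x)" by simp
  thus ?thesis using mle_antisym le x smul_in k by blast
qed

lemma irr_smul: assumes "finite S" "S \<subseteq> carrier G" "x \<in> M" "join_irreducible M add zero v" "v = smul S x"
  shows "\<exists>g\<in>S. v = smul {g} x"
  using assms
proof (induction S rule: finite_induct)
  case empty
  then show ?case using smul_empty by (simp add: join_irreducible_def)
next
  case (insert g S)
  have "v = add (smul {g} x) (smul S x)" using insert smul_un[of "{g}" S x] by simp
  hence "v = smul {g} x \<or> v = smul S x"
    using insert.prems smul_in unfolding join_irreducible_def by (metis empty_subsetI insert_subset)
  then show ?case using insert by auto
qed

lemma foldr_in: "set xs \<subseteq> M \<Longrightarrow> length Ss = length xs \<Longrightarrow> (\<forall>S\<in>set Ss. S \<subseteq> carrier G)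
   \<Longrightarrow> foldr add (map2 smul Ss xs) zero \<in> M"
proof (induction xs arbitrary: Ss)
  case Nil
  then show ?case using zero_in by simp
next
  case (Cons a xs)
  then obtain S Ss' where "Ss = S # Ss'" by (cases Ss) auto
  then show ?case using Cons add_in smul_in by auto
qed

lemma irr_fold: "set xs \<subseteq> M \<Longrightarrow> length Ss = length xs \<Longrightarrow> (\<forall>S\<in>set Ss. S \<subseteq> carrier G)
   \<Longrightarrow> join_irreducible M add zero v \<Longrightarrow> v = foldr add (map2 smul Ss xs) zero
   \<Longrightarrow> \<exists>i<length xs. \<exists>g\<in>carrier G. v = smul {g} (xs ! i)"
proof (induction xs arbitrary: Ss)
  case Nil
  then show ?case by (simp add: join_irreducible_def)
next
  case (Cons a xs)
  then obtain S Ss' where S: "Ss = S # Ss'" by (cases Ss) auto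
  have rest: "foldr add (map2 smul Ss' xs) zero \<in> M" using foldr_in Cons S by auto
  have "v = add (smul S a) (foldr add (map2 smul Ss' xs) zero)" using Cons.prems S by simp
  hence "v = smul S a \<or> v = foldr add (map2 smul Ss' xs) zero"
    using Cons.prems rest smul_in S unfolding join_irreducible_def by auto
  then show ?case
  proof
    assume "v = smul S a"
    then obtain g where g: "g \<in> S" "v = smul {g} a"
      using irr_smul[of S a v] Cons.prems S fin rev_finite_subset by auto
    have "S \<subseteq> carrier G" using Cons.prems(3) S by simp
    hence "g \<in> carrier G" using g by blast
    hence gg: "g \<in> carrier G" "v = smul {g} ((a # xs) ! 0)" using g by simp_all
    have "0 < length (a # xs)" by simp
    show ?thesis
    proof (rule exI[of _ 0], rule conjI)
      show "0 < length (a # xs)" by simp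
      show "\<exists>g\<in>carrier G. v = smul {g} ((a # xs) ! 0)" by (rule bexI[where P="\<lambda>h. v = smul {h} ((a # xs) ! 0)" and x=g, OF gg(2) gg(1)])
    qed
  next
    assume vr: "v = foldr add (map2 smul Ss' xs) zero"
    have "\<exists>i<length xs. \<exists>g\<in>carrier G. v = smul {g} (xs ! i)"
    proof (rule Cons.IH[of Ss'])
      show "set xs \<subseteq> M" using Cons.prems(1) by simp
      show "length Ss' = length xs" using Cons.prems(2) S by simp
      show "\<forall>S\<in>set Ss'. S \<subseteq> carrier G" using Cons.prems(3) S by simp
      show "join_irreducible M add zero v" by (rule Cons.prems(4))
      show "v = foldr add (map2 smul Ss' xs) zero" by (rule vr)
    qed
    then obtain i g where "i < length xs" "g \<in> carrier G" "v = smul {g} (xs ! i)"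
      by blast
    then show ?thesis by (intro exI[of _ "Suc i"]) auto
  qed
qed

lemma same_gen: assumes g: "g \<in> carrier G" and h: "h \<in> carrier G" and x: "x \<in> M"
  and le: "mle add (smul {g} x) (smul {h} x)"
  shows "smul {g} x = smul {h} x"
proof -
  let ?k = "inv h \<otimes> g"
  have k: "?k \<in> carrier G" using g h by simp
  have "mle add (smul {inv h} (smul {g} x)) (smul {inv h} (smul {h} x))"
    using mle_mono[OF _ smul_in[OF _ x] smul_in[OF _ x] le] g h by simp
  hence "mle add (smul {?k} x) x" using smul_g g h x smul_one by simp
  hence kx: "smul {?k} x = x" using fixed k x by blast
  have "h \<otimes> ?k = g" using g h by (simp add: m_assoc[symmetric])
  hence "smul {g} x = smul {h} (smul {?k} x)" using smul_g[of h ?k x] h k x by simp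
  thus ?thesis using kx by simp
qed

end

theorem proposition4p13:
  fixes G :: "('g, 'b) monoid_scheme" and M :: "'m set" and add :: "'m \<Rightarrow> 'm \<Rightarrow> 'm"
    and zero :: 'm and smul :: "'g set \<Rightarrow> 'm \<Rightarrow> 'm" and n :: nat
  assumes "group G" and "finite (carrier G)"
    and "BG_module G M add zero smul"
    and "\<exists>xs. length xs = n \<and> generated_by G M add zero smul xs"
    and "C \<subseteq> {v \<in> M. join_irreducible M add zero v}"
    and "\<forall>x\<in>C. \<forall>y\<in>C. mle add x y \<or> mle add y x"
  shows "finite C \<and> card C \<le> n"
proof -
  interpret B: bgmod G M add zero smul
    using assms by (simp add: bgmod_def bgmod_axioms_def)
  obtain xs where xs: "length xs = n" "generated_by G M add zero smul xs" using assms by blast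
  have rep: "\<exists>i<n. \<exists>g\<in>carrier G. v = smul {g} (xs ! i)" if v: "v \<in> C" for v
  proof -
    have vM: "v \<in> M" "join_irreducible M add zero v" using v assms(5) by auto
    then obtain Ss where "length Ss = length xs" "\<forall>S\<in>set Ss. S \<subseteq> carrier G"
      "v = foldr add (map2 smul Ss xs) zero" using xs(2) unfolding generated_by_def by blast
    thus ?thesis using B.irr_fold[of xs Ss v] vM xs unfolding generated_by_def by auto
  qed
  define f where "f v = (SOME i. i < n \<and> (\<exists>g\<in>carrier G. v = smul {g} (xs ! i)))" for v
  have f: "f v < n \<and> (\<exists>g\<in>carrier G. v = smul {g} (xs ! f v))" if "v \<in> C" for v
    unfolding f_def using someI_ex[OF rep[OF that]] .
  have inj: "inj_on f C"
  proof (rule inj_onI)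
    fix v w assume v: "v \<in> C" and w: "w \<in> C" and eq: "f v = f w"
    obtain g where g: "g \<in> carrier G" "v = smul {g} (xs ! f v)" using f v by blast
    obtain h where h: "h \<in> carrier G" "w = smul {h} (xs ! f v)" using f w eq by metis
    have x: "xs ! f v \<in> M" using f[OF v] xs unfolding generated_by_def by auto
    have "mle add v w \<or> mle add w v" using assms(6) v w by blast
    thus "v = w"
    proof
      assume "mle add v w" thus ?thesis using B.same_gen[OF g(1) h(1) x] g h by simp
    next
      assume "mle add w v" thus ?thesis using B.same_gen[OF h(1) g(1) x] g h by simp
    qed
  qed
  have sub: "f ` C \<subseteq> {..<n}" using f by auto
  have "finite C" using inj sub finite_imageD finite_subset by blast
  moreover have "card C \<le> n" using card_inj_on_le[OF inj sub] by simp
  ultimately show ?thesis by simp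
qed

end
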